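(* Let $S$ be an $a$-cap free configuration. Then a slope labeling of $S$ exists. In particular, for every edge $e$ of $S$ let $c(e)$ be the maximum size of a cap starting with the edge $e$; then the function $e \mapsto c(e)-1$ is a slope labeling of $S$.
   Context: A configuration is a finite set $S$ of points with a linear order $<$ and, for every $3$-element subset, an arbitrary assignment declaring it either a cap or a cup. Points $x_1<\cdots<x_a$ form an $a$-cup (resp. $a$-cap) if every consecutive triple $\{x_{i-1},x_i,x_{i+1}\}$, $1<i<a$, is assigned cup (resp. cap); $1$- and $2$-element sets are both caps and cups. $S$ is $a$-cap free if it contains no $a$-cap. An edge is a pair $x<y$ of points, written $xy$; a cap $x_1x_2\cdots x_a$ with $a \ge 2$ starts with the edge $x_1x_2$. A slope labeling of an $a$-cap free configuration $S$ is an assignment of an integer $s(xy) \in \{1, 2, \dots, a-2\}$ to every edge $xy$ of $S$ such that for any points $x<y<z$ in $S$, $s(xy) \leq s(yz)$ implies that $\{x,y,z\}$ is a $3$-cup. *)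

theory Defs
  imports Main
begin

text \<open>A configuration: a finite set S of a linearly ordered type, together with a
predicate cup on sets; a 3-element subset T is a cup if cup T holds and a cap otherwise.
(The values of cup on sets that are not 3-element subsets of S are irrelevant.)\<close>

definition is_cup :: "'a::linorder set \<Rightarrow> ('a set \<Rightarrow> bool) \<Rightarrow> 'a list \<Rightarrow> bool" where
  "is_cup S cup xs \<longleftrightarrow> sorted_wrt (<) xs \<and> set xs \<subseteq> S \<and>
     (\<forall>i. i + 2 < length xs \<longrightarrow> cup {xs ! i, xs ! (i+1), xs ! (i+2)})"

definition is_cap :: "'a::linorder set \<Rightarrow> ('a set \<Rightarrow> bool) \<Rightarrow> 'a list \<Rightarrow> bool" where
  "is_cap S cup xs \<longleftrightarrow> sorted_wrt (<) xs \<and> set xs \<subseteq> S \<and>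
     (\<forall>i. i + 2 < length xs \<longrightarrow> \<not> cup {xs ! i, xs ! (i+1), xs ! (i+2)})"

definition cap_free :: "nat \<Rightarrow> 'a::linorder set \<Rightarrow> ('a set \<Rightarrow> bool) \<Rightarrow> bool" where
  "cap_free a S cup \<longleftrightarrow> \<not> (\<exists>xs. is_cap S cup xs \<and> length xs = a)"

definition slope_labeling ::
  "nat \<Rightarrow> 'a::linorder set \<Rightarrow> ('a set \<Rightarrow> bool) \<Rightarrow> ('a \<Rightarrow> 'a \<Rightarrow> nat) \<Rightarrow> bool" where
  "slope_labeling a S cup s \<longleftrightarrow>
     (\<forall>x\<in>S. \<forall>y\<in>S. x < y \<longrightarrow> s x y \<in> {1..a-2}) \<and>
     (\<forall>x\<in>S. \<forall>y\<in>S. \<forall>z\<in>S. x < y \<and> y < z \<and> s x y \<le> s y z \<longrightarrow> cup {x, y, z})"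

definition max_cap_from :: "'a::linorder set \<Rightarrow> ('a set \<Rightarrow> bool) \<Rightarrow> 'a \<Rightarrow> 'a \<Rightarrow> nat" where
  "max_cap_from S cup x y =
     Max {length xs | xs. is_cap S cup xs \<and> 2 \<le> length xs \<and> xs ! 0 = x \<and> xs ! 1 = y}"

end

theory Submission
  imports Defs
begin

lemma cap_take: "is_cap S cup xs \<Longrightarrow> is_cap S cup (take n xs)"
  unfolding is_cap_def
  by (auto simp: sorted_wrt_take dest: in_set_takeD)

lemma cap_len:
  assumes "cap_free a S cup" "is_cap S cup xs" shows "length xs < a"
proof (rule ccontr)
  assume "\<not> length xs < a"
  then have "length (take a xs) = a" by simp
  with cap_take[OF assms(2)] assms(1) show False unfolding cap_free_def by blast
qed

lemma cap_cons:
  assumes "is_cap S cup ys" "2 \<le> length ys" "ys!0 = y" "ys!1 = z" "x < y" "x \<in> S"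
    "\<not> cup {x,y,z}"
  shows "is_cap S cup (x#ys)"
proof -
  obtain ys' where ys: "ys = y # ys'" using assms(2,3) by (cases ys) auto
  have "\<forall>w\<in>set ys. y \<le> w" using assms(1) unfolding is_cap_def ys by auto
  then have s: "sorted_wrt (<) (x#ys)" using assms(1,5) unfolding is_cap_def
    by (auto intro: less_le_trans)
  have i: "\<not> cup {(x#ys) ! i, (x#ys) ! (i+1), (x#ys) ! (i+2)}" if "i + 2 < length (x#ys)" for i
  proof (cases i)
    case 0 then show ?thesis using assms(3,4,7) ys by simp
  next
    case (Suc j) then show ?thesis using assms(1) that unfolding is_cap_def by simp
  qed
  show ?thesis using s i assms(1,6) unfolding is_cap_def by auto
qed

lemma mcf:
  assumes "cap_free a S cup" "x \<in> S" "y \<in> S" "x < y"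
  shows "2 \<le> max_cap_from S cup x y \<and> max_cap_from S cup x y < a \<and>
     (\<forall>xs. is_cap S cup xs \<and> 2 \<le> length xs \<and> xs ! 0 = x \<and> xs ! 1 = y \<longrightarrow> length xs \<le> max_cap_from S cup x y) \<and>
     (\<exists>xs. is_cap S cup xs \<and> 2 \<le> length xs \<and> xs ! 0 = x \<and> xs ! 1 = y \<and> length xs = max_cap_from S cup x y)"
proof -
  let ?A = "{length xs | xs. is_cap S cup xs \<and> 2 \<le> length xs \<and> xs ! 0 = x \<and> xs ! 1 = y}"
  have sub: "?A \<subseteq> {..<a}" using cap_len[OF assms(1)] by auto
  then have fin: "finite ?A" using finite_subset by blast
  have c2: "is_cap S cup [x,y]" using assms unfolding is_cap_def by auto
  moreover have "length [x,y] = 2" "(2::nat) \<le> length [x,y]" "[x,y] ! 0 = x" "[x,y] ! 1 = y" by simp_all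
  ultimately have "2 \<in> ?A" by (metis (mono_tags, lifting) mem_Collect_eq)
  then have ne: "?A \<noteq> {}" by blast
  have m: "max_cap_from S cup x y = Max ?A" unfolding max_cap_from_def by simp
  have "Max ?A \<in> ?A" using Max_in[OF fin ne] .
  then obtain zs where zs: "is_cap S cup zs" "2 \<le> length zs" "zs ! 0 = x" "zs ! 1 = y" "length zs = Max ?A"
    by (smt (verit) mem_Collect_eq)
  have "2 \<le> Max ?A" using Max_ge[OF fin \<open>2 \<in> ?A\<close>] .
  moreover have "\<forall>xs. is_cap S cup xs \<and> 2 \<le> length xs \<and> xs ! 0 = x \<and> xs ! 1 = y \<longrightarrow> length xs \<le> Max ?A"
  proof (intro allI impI)
    fix xs assume "is_cap S cup xs \<and> 2 \<le> length xs \<and> xs ! 0 = x \<and> xs ! 1 = y"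
    then have "length xs \<in> ?A" by blast
    then show "length xs \<le> Max ?A" using Max_ge[OF fin] by blast
  qed
  moreover have "Max ?A < a" using cap_len[OF assms(1) zs(1)] zs(5) by simp
  ultimately show ?thesis unfolding m using zs by blast
qed

theorem theorem3p2:
  fixes S :: "'a::linorder set" and cup :: "'a set \<Rightarrow> bool" and a :: nat
  assumes "finite S" and "cap_free a S cup"
  shows "(\<exists>s. slope_labeling a S cup s) \<and>
         slope_labeling a S cup (\<lambda>x y. max_cap_from S cup x y - 1)"
proof -
  have L: "slope_labeling a S cup (\<lambda>x y. max_cap_from S cup x y - 1)"
    unfolding slope_labeling_def
  proof (intro conjI ballI impI allI)
    fix x y assume "x \<in> S" "y \<in> S" "x < y"
    from mcf[OF assms(2) this] show "max_cap_from S cup x y - 1 \<in> {1..a-2}" by auto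
  next
    fix x y z assume xyz: "x \<in> S" "y \<in> S" "z \<in> S"
      and o: "x < y \<and> y < z \<and> max_cap_from S cup x y - 1 \<le> max_cap_from S cup y z - 1"
    show "cup {x, y, z}"
    proof (rule ccontr)
      assume nc: "\<not> cup {x, y, z}"
      have A: "2 \<le> max_cap_from S cup x y" and B: "\<forall>xs. is_cap S cup xs \<and> 2 \<le> length xs \<and> xs ! 0 = x \<and> xs ! 1 = y \<longrightarrow> length xs \<le> max_cap_from S cup x y"
        using mcf[OF assms(2) xyz(1,2)] o by auto
      obtain ys where ys: "is_cap S cup ys" "2 \<le> length ys" "ys ! 0 = y" "ys ! 1 = z"
        "length ys = max_cap_from S cup y z"
        using mcf[OF assms(2) xyz(2,3)] o by blast
      have "is_cap S cup (x#ys)" using cap_cons[OF ys(1-4) _ xyz(1) nc] o by simp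
      moreover have "2 \<le> length (x#ys)" "(x#ys) ! 0 = x" "(x#ys) ! 1 = y" using ys by auto
      ultimately have "length (x#ys) \<le> max_cap_from S cup x y" using B by blast
      then show False using ys(2,5) A o by (simp only: length_Cons conj_assoc) arith
    qed
  qed
  have E: "\<exists>s. slope_labeling a S cup s"
    by (rule exI[where x="\<lambda>x y. max_cap_from S cup x y - 1"]) (rule L)
  show ?thesis using E L by (rule conjI)
qed

end
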